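(* Fix $p,r\in(0,1/36)$ with $\log p/\log r$ irrational, and let $h=1/2$, $a=1/3$. For $q\in(0,1/36)$ let $\mathcal S_q=\{S_1,\dots,S_6\}$ be the system on $\mathbb R$ given by $S_1(x)=px$, $S_2(x)=a+rx$, $S_3(x)=h-qx$, $S_4(x)=h-r+rx$, $S_5(x)=1-a-rx$, $S_6(x)=1-r+rx$, with attractor $K=K(q)$ and pieces $K_i=S_i(K)$. Then for Lebesgue almost all $q\in(0,1/36)$: $K_3\cap K_4=\{1/2\}$, $K_i\cap K_j=\varnothing$ for all other pairs $i\ne j$, and $\mathcal S_q$ does not satisfy the Weak Separation Property.
   Context: The attractor $K$ is the unique nonempty compact set with $K=\bigcup_{i=1}^6S_i(K)$. For a system $\{S_1,\dots,S_m\}$ of contracting similarities of $\mathbb R$, let $\mathcal F=\{S_{\mathbf i}^{-1}S_{\mathbf j}:\mathbf i,\mathbf j\in I^*\}$, where $I^*$ is the set of finite words over $\{1,\dots,m\}$ and $S_{j_1\dots j_k}=S_{j_1}\circ\dots\circ S_{j_k}$; the system satisfies the Weak Separation Property if $\mathrm{Id}\notin\overline{\mathcal F\setminus\{\mathrm{Id}\}}$, the closure taken in the space of affine maps of $\mathbb R$ with the topology of convergence of coefficients. *)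

theory Defs
  imports "HOL-Analysis.Analysis"
begin

text \<open>An affine map x |-> c*x + d of the real line is encoded by its coefficient pair (c, d);
  the topology on real \<times> real is then exactly convergence of coefficients.\<close>

definition affc :: "real \<times> real \<Rightarrow> real \<Rightarrow> real" where
  "affc f x = fst f * x + snd f"

definition acomp :: "real \<times> real \<Rightarrow> real \<times> real \<Rightarrow> real \<times> real" where
  "acomp f g = (fst f * fst g, fst f * snd g + snd f)"

definition ainv :: "real \<times> real \<Rightarrow> real \<times> real" where
  "ainv f = (1 / fst f, - snd f / fst f)"

text \<open>S_{j1...jk} = S_{j1} o ... o S_{jk}; the empty word gives the identity (1,0).\<close>
definition word_map :: "(nat \<Rightarrow> real \<times> real) \<Rightarrow> nat list \<Rightarrow> real \<times> real" where
  "word_map S w = foldr (\<lambda>i acc. acomp (S i) acc) w (1, 0)"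

definition WSP_family :: "nat \<Rightarrow> (nat \<Rightarrow> real \<times> real) \<Rightarrow> (real \<times> real) set" where
  "WSP_family m S = {acomp (ainv (word_map S u)) (word_map S v) | u v.
      set u \<subseteq> {1..m} \<and> set v \<subseteq> {1..m}}"

definition weak_separation :: "nat \<Rightarrow> (nat \<Rightarrow> real \<times> real) \<Rightarrow> bool" where
  "weak_separation m S \<longleftrightarrow> (1, 0) \<notin> closure (WSP_family m S - {(1, 0)})"

definition attractor :: "nat \<Rightarrow> (nat \<Rightarrow> real \<times> real) \<Rightarrow> real set" where
  "attractor m S = (THE K. K \<noteq> {} \<and> compact K \<and> K = (\<Union>i\<in>{1..m}. affc (S i) ` K))"

definition sysq :: "real \<Rightarrow> real \<Rightarrow> real \<Rightarrow> nat \<Rightarrow> real \<times> real" where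
  "sysq p r q i =
     (if i = 1 then (p, 0)
      else if i = 2 then (r, 1/3)
      else if i = 3 then (-q, 1/2)
      else if i = 4 then (r, 1/2 - r)
      else if i = 5 then (-r, 1 - 1/3)
      else (r, 1 - r))"

end

theory Submission
  imports Defs
begin


definition wm :: "(nat \<Rightarrow> real\<times>real) \<Rightarrow> nat list \<Rightarrow> real \<Rightarrow> real" where
 "wm f w t = foldr (\<lambda>i x. affc (f i) x) w t"

lemma wm_Nil[simp]: "wm f [] t = t" and wm_Cons[simp]: "wm f (i#w) t = affc (f i) (wm f w t)"
  by (simp_all add: wm_def)

primrec Lv :: "nat \<Rightarrow> (nat \<Rightarrow> real\<times>real) \<Rightarrow> nat \<Rightarrow> real set" where
  "Lv m f 0 = {0..1}"
| "Lv m f (Suc k) = (\<Union>i\<in>{1..m}. affc (f i) ` Lv m f k)"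

definition Xs where "Xs m f = (\<Inter>k. Lv m f k)"

lemma affc_diff: "affc g x - affc g y = fst g * (x - y)"
  by (simp add: affc_def algebra_simps)

lemma continuous_on_affc[continuous_intros]: "continuous_on S (affc g)"
  unfolding affc_def by (intro continuous_intros)

locale ifs =
  fixes m :: nat and f :: "nat \<Rightarrow> real\<times>real" and \<rho> :: real and i0 :: nat and z0 :: real
  assumes rho: "0 \<le> \<rho>" "\<rho> < 1"
    and contr: "\<And>i. i\<in>{1..m} \<Longrightarrow> \<bar>fst (f i)\<bar> \<le> \<rho>"
    and into: "\<And>i x. i\<in>{1..m} \<Longrightarrow> x\<in>{0..1} \<Longrightarrow> affc (f i) x \<in> {0..1}"
    and nz: "\<And>i. i \<in> {1..m} \<Longrightarrow> fst (f i) \<noteq> 0"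
    and fx: "i0 \<in> {1..m}" "z0 \<in> {0..1}" "affc (f i0) z0 = z0"
begin

lemma Lv_sub01: "Lv m f k \<subseteq> {0..1}"
  by (induction k) (use into in auto)

lemma Lv_mono: "Lv m f (Suc k) \<subseteq> Lv m f k"
proof (induction k)
  case 0
  then show ?case using into by auto
next
  case (Suc k)
  have "Lv m f (Suc (Suc k)) = (\<Union>i\<in>{1..m}. affc (f i) ` Lv m f (Suc k))" by (rule Lv.simps(2))
  also have "\<dots> \<subseteq> (\<Union>i\<in>{1..m}. affc (f i) ` Lv m f k)" using Suc.IH by blast
  also have "\<dots> = Lv m f (Suc k)" by simp
  finally show ?case .
qed

lemma Lv_mono': assumes "k' \<le> k" shows "Lv m f k \<subseteq> Lv m f k'"
proof -
  have "Lv m f (k'+d) \<subseteq> Lv m f k'" for d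
  proof (induction d)
    case 0 then show ?case by simp
  next
    case (Suc d) then show ?case using Lv_mono[of "k'+d"] by simp
  qed
  from this[of "k-k'"] show ?thesis using assms by simp
qed

lemma Lv_compact: "compact (Lv m f k)"
proof (induction k)
  case 0 then show ?case by simp
next
  case (Suc k)
  have "compact (affc (f i) ` Lv m f k)" for i using compact_continuous_image[OF continuous_on_affc Suc.IH] .
  then show ?case by (simp add: compact_UN)
qed

lemma Lv_words: "x \<in> Lv m f k \<Longrightarrow> \<exists>w t. length w = k \<and> set w \<subseteq> {1..m} \<and> t\<in>{0..1} \<and> x = wm f w t"
proof (induction k arbitrary: x)
  case 0
  then show ?case by (intro exI[of _ "[]"]) auto
next
  case (Suc k)
  then obtain i y where i: "i\<in>{1..m}" "y \<in> Lv m f k" "x = affc (f i) y" by auto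
  from Suc.IH[OF i(2)] obtain w t where wt: "length w = k" "set w \<subseteq> {1..m}" "t\<in>{0..1}" "y = wm f w t" by blast
  have "length (i#w) = Suc k" using wt(1) by simp
  moreover have "set (i#w) \<subseteq> {1..m}" using wt(2) i(1) by simp
  moreover have "x = wm f (i#w) t" using wt(4) i(3) by simp
  ultimately show ?case using wt(3) by blast
qed

lemma wm_lip: "set w \<subseteq> {1..m} \<Longrightarrow> \<bar>wm f w t - wm f w t'\<bar> \<le> \<rho>^length w * \<bar>t-t'\<bar>"
proof (induction w)
  case Nil
  then show ?case by simp
next
  case (Cons i w)
  have "\<bar>wm f (i#w) t - wm f (i#w) t'\<bar> = \<bar>fst (f i)\<bar> * \<bar>wm f w t - wm f w t'\<bar>"
    by (simp add: affc_diff abs_mult)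
  also have "\<dots> \<le> \<rho> * (\<rho>^length w * \<bar>t-t'\<bar>)"
  proof -
    have ih: "\<bar>wm f w t - wm f w t'\<bar> \<le> \<rho>^length w * \<bar>t-t'\<bar>" using Cons by simp
    have ci: "\<bar>fst (f i)\<bar> \<le> \<rho>" using Cons.prems contr by simp
    show ?thesis by (rule mult_mono[OF ci ih]) (use rho in auto)
  qed
  finally show ?case by simp
qed

lemma z0_Lv: "z0 \<in> Lv m f k"
proof (induction k)
  case 0 then show ?case using fx by simp
next
  case (Suc k)
  have "z0 \<in> affc (f i0) ` Lv m f k" using Suc fx(3) by (metis image_eqI)
  then show ?case using fx(1) by auto
qed

lemma Xs_nonempty: "Xs m f \<noteq> {}"
  using z0_Lv unfolding Xs_def by blast

lemma Xs_sub01: "Xs m f \<subseteq> {0..1}"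
proof -
  have "Xs m f \<subseteq> Lv m f 0" unfolding Xs_def by blast
  then show ?thesis by simp
qed

lemma Xs_compact: "compact (Xs m f)"
proof -
  have "closed (Xs m f)" unfolding Xs_def using Lv_compact by (intro closed_INT) (simp add: compact_imp_closed)
  moreover have "bounded (Xs m f)" using Xs_sub01 bounded_subset[OF compact_imp_bounded[OF compact_Icc]] by blast
  ultimately show ?thesis using compact_eq_bounded_closed by blast
qed

lemma Xs_inv: "Xs m f = (\<Union>i\<in>{1..m}. affc (f i) ` Xs m f)"
proof
  show "(\<Union>i\<in>{1..m}. affc (f i) ` Xs m f) \<subseteq> Xs m f"
  proof clarify
    fix i x assume i: "i \<in> {1..m}" and x: "x \<in> Xs m f"
    have "affc (f i) x \<in> Lv m f k" for k
    proof (cases k)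
      case 0 then show ?thesis using into[OF i] Xs_sub01 x by auto
    next
      case (Suc k')
      have "x \<in> Lv m f k'" using x unfolding Xs_def by blast
      then show ?thesis using i Suc by auto
    qed
    then show "affc (f i) x \<in> Xs m f" unfolding Xs_def by auto
  qed
next
  show "Xs m f \<subseteq> (\<Union>i\<in>{1..m}. affc (f i) ` Xs m f)"
  proof
    fix x assume x: "x \<in> Xs m f"
    define Q where "Q i k \<longleftrightarrow> (\<exists>y\<in>Lv m f k. x = affc (f i) y)" for i k
    have Qall: "\<exists>i\<in>{1..m}. Q i k" for k
    proof -
      have "x \<in> Lv m f (Suc k)" using x unfolding Xs_def by blast
      then obtain i y where "i\<in>{1..m}" "y\<in>Lv m f k" "x = affc (f i) y" by auto
      then show ?thesis unfolding Q_def by blast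
    qed
    have Qmono: "Q i k \<Longrightarrow> k' \<le> k \<Longrightarrow> Q i k'" for i k k'
      unfolding Q_def using Lv_mono' by blast
    have "\<exists>i\<in>{1..m}. \<forall>k. Q i k"
    proof (rule ccontr)
      assume "\<not> ?thesis"
      then have "\<forall>i\<in>{1..m}. \<exists>k. \<not> Q i k" by blast
      then obtain kk where kk: "\<forall>i\<in>{1..m}. \<not> Q i (kk i)" by metis
      define K where "K = (\<Sum>i\<in>{1..m}. kk i)"
      obtain i where i: "i\<in>{1..m}" "Q i K" using Qall by blast
      have "kk i \<le> K" unfolding K_def using i(1) by (intro member_le_sum) auto
      then show False using Qmono[OF i(2)] kk i(1) by blast
    qed
    then obtain i where i: "i\<in>{1..m}" "\<forall>k. Q i k" by blast
    then obtain y0 where y0: "y0 \<in> Lv m f 0" "x = affc (f i) y0" unfolding Q_def by blast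
    have "y0 \<in> Lv m f k" for k
    proof -
      obtain y where y: "y \<in> Lv m f k" "x = affc (f i) y" using i unfolding Q_def by blast
      have "fst (f i) * (y - y0) = 0" using y y0 affc_diff[of "f i" y y0] by simp
      then have "y = y0" using nz[OF i(1)] by simp
      then show ?thesis using y by simp
    qed
    then show "x \<in> (\<Union>i\<in>{1..m}. affc (f i) ` Xs m f)" using i(1) y0(2) unfolding Xs_def by blast
  qed
qed

definition gd :: "real \<Rightarrow> real" where "gd y = max 0 (max (-y) (y-1))"

lemma gd_contr: assumes i: "i \<in> {1..m}" shows "gd (affc (f i) y) \<le> \<rho> * gd y"
proof -
  have c: "\<bar>fst (f i)\<bar> \<le> \<rho>" using contr[OF i] .
  have lip: "gd (u + v) \<le> gd u + \<bar>v\<bar>" for u v unfolding gd_def by auto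
  have g0: "u \<in> {0..1} \<Longrightarrow> gd u = 0" for u unfolding gd_def by auto
  have gn: "gd y \<ge> 0" unfolding gd_def by auto
  consider "y \<in> {0..1}" | "y > 1" | "y < 0" by force
  then show ?thesis
  proof cases
    case 1 then show ?thesis using g0 into[OF i 1] gn rho by simp
  next
    case 2
    have e: "affc (f i) y = affc (f i) 1 + fst (f i) * (y - 1)" by (simp add: affc_def algebra_simps)
    have "gd (affc (f i) y) \<le> 0 + \<bar>fst (f i) * (y - 1)\<bar>"
      using lip[of "affc (f i) 1" "fst (f i) * (y - 1)"] g0[OF into[OF i]] e by simp
    also have "\<dots> \<le> \<rho> * (y - 1)" using 2 c by (simp add: abs_mult mult_right_mono)
    also have "\<dots> = \<rho> * gd y" using 2 unfolding gd_def by simp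
    finally show ?thesis .
  next
    case 3
    have e: "affc (f i) y = affc (f i) 0 + fst (f i) * y" by (simp add: affc_def algebra_simps)
    have "gd (affc (f i) y) \<le> 0 + \<bar>fst (f i) * y\<bar>"
      using lip[of "affc (f i) 0" "fst (f i) * y"] g0[OF into[OF i]] e by simp
    also have "\<dots> \<le> \<rho> * (-y)" using 3 c by (simp add: abs_mult mult_right_mono)
    also have "\<dots> = \<rho> * gd y" using 3 unfolding gd_def by simp
    finally show ?thesis .
  qed
qed

lemma unique:
  assumes K: "K \<noteq> {}" "compact K" "K = (\<Union>i\<in>{1..m}. affc (f i) ` K)"
  shows "K = Xs m f"
proof -
  have cont: "continuous_on K gd" unfolding gd_def by (intro continuous_intros)
  obtain x where x: "x \<in> K" "\<forall>y\<in>K. gd y \<le> gd x"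
    using continuous_attains_sup[OF K(2) K(1) cont] by blast
  have "x \<in> (\<Union>i\<in>{1..m}. affc (f i) ` K)" using equalityD1[OF K(3)] x(1) by (rule subsetD)
  then obtain i y where iy: "i \<in> {1..m}" "y \<in> K" "x = affc (f i) y" by blast
  have "gd x \<le> \<rho> * gd y" using gd_contr[OF iy(1)] iy(3) by simp
  also have "\<dots> \<le> \<rho> * gd x" using x iy rho by (simp add: mult_left_mono)
  finally have "(1 - \<rho>) * gd x \<le> 0" by (simp add: algebra_simps)
  then have "gd x \<le> 0" using rho by (simp add: mult_le_0_iff)
  note gx = this
  have K01: "K \<subseteq> {0..1}"
  proof
    fix y assume "y \<in> K"
    then have "gd y \<le> 0" using x(2) gx by (meson order_trans)
    then show "y \<in> {0..1}" unfolding gd_def by simp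
  qed
  have KL: "K \<subseteq> Lv m f k" for k
  proof (induction k)
    case 0 then show ?case using K01 by simp
  next
    case (Suc k)
    have "K \<subseteq> (\<Union>i\<in>{1..m}. affc (f i) ` K)" using K(3) by (rule equalityD1)
    then have "K \<subseteq> (\<Union>i\<in>{1..m}. affc (f i) ` Lv m f k)"
      using Suc by blast
    then show ?case by simp
  qed
  have Ksub: "(\<Union>i\<in>{1..m}. affc (f i) ` K) \<subseteq> K" using K(3) by (rule equalityD2)
  have Kw: "set w \<subseteq> {1..m} \<Longrightarrow> y \<in> K \<Longrightarrow> wm f w y \<in> K" for w y
  proof (induction w)
    case Nil then show ?case by simp
  next
    case (Cons i w)
    then have "wm f w y \<in> K" "i \<in> {1..m}" by auto
    then have "affc (f i) (wm f w y) \<in> (\<Union>i\<in>{1..m}. affc (f i) ` K)" by blast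
    then have "affc (f i) (wm f w y) \<in> K" using Ksub by (meson subsetD)
    then show ?case by simp
  qed
  have "Xs m f \<subseteq> K"
  proof
    fix x assume x: "x \<in> Xs m f"
    have "\<forall>e>0. \<exists>y\<in>K. dist y x < e"
    proof (intro allI impI)
      fix e :: real assume e: "e > 0"
      obtain k where k: "\<rho>^k < e" using real_arch_pow_inv[OF e rho(2)] by blast
      from x have "x \<in> Lv m f k" unfolding Xs_def by blast
      then obtain w t where wt: "length w = k" "set w \<subseteq> {1..m}" "t\<in>{0..1}" "x = wm f w t"
        using Lv_words by blast
      obtain y0 where y0: "y0 \<in> K" using K(1) by blast
      have "wm f w y0 \<in> K" using Kw[OF wt(2) y0] .
      moreover have "dist (wm f w y0) x \<le> \<rho>^k * \<bar>y0 - t\<bar>"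
        using wm_lip[OF wt(2), of y0 t] wt by (simp add: dist_real_def)
      moreover have "y0 \<in> {0..1}" using y0 K01 by blast
      moreover have "\<bar>y0 - t\<bar> \<le> 1" using calculation(3) wt(3) by auto
      moreover have "\<rho>^k \<ge> 0" using rho by simp
      ultimately have "dist (wm f w y0) x \<le> \<rho>^k" by (smt (verit) mult_left_le)
      then have "dist (wm f w y0) x < e" using k by linarith
      then show "\<exists>y\<in>K. dist y x < e" using \<open>wm f w y0 \<in> K\<close> by blast
    qed
    then show "x \<in> K" using closed_approachable[OF compact_imp_closed[OF K(2)], of x] by simp
  qed
  moreover have "K \<subseteq> Xs m f" using KL unfolding Xs_def by blast
  ultimately show ?thesis by blast
qed

lemma attractor_eq: "attractor m f = Xs m f"
  unfolding attractor_def
proof (rule the_equality)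
  show "Xs m f \<noteq> {} \<and> compact (Xs m f) \<and> Xs m f = (\<Union>i\<in>{1..m}. affc (f i) ` Xs m f)"
    by (intro conjI Xs_nonempty Xs_compact Xs_inv)
next
  fix K assume H: "K \<noteq> {} \<and> compact K \<and> K = (\<Union>i\<in>{1..m}. affc (f i) ` K)"
  show "K = Xs m f" by (rule unique[OF conjunct1[OF H] conjunct1[OF conjunct2[OF H]] conjunct2[OF conjunct2[OF H]]])
qed

end


lemma sysq_3: "sysq p r q 3 = (-q, 1/2)" by (simp add: sysq_def)
lemma sysq_not3: "i \<noteq> 3 \<Longrightarrow> sysq p r q i = sysq p r q' i" by (simp add: sysq_def)

lemma sysq_fst_bound:
  assumes "0<p" "p \<le> \<rho>" "0<r" "r \<le> \<rho>" "0<q" "q \<le> \<rho>"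
  shows "\<bar>fst (sysq p r q i)\<bar> \<le> \<rho>"
  using assms by (simp add: sysq_def)

lemma sysq_nz: "0<p \<Longrightarrow> 0<r \<Longrightarrow> 0<q \<Longrightarrow> fst (sysq p r q i) \<noteq> 0"
  by (simp add: sysq_def)

lemma sysq_range:
  assumes "0<p" "p<1/36" "0<r" "r<1/36" "0<q" "q<1/36" "x\<in>{0..1}" "i \<in> {1..6}"
  shows "(i = 1 \<longrightarrow> affc (sysq p r q i) x = p * x) \<and>
         (i = 6 \<longrightarrow> 1 - affc (sysq p r q i) x = r * (1 - x)) \<and>
         (i \<noteq> 1 \<longrightarrow> affc (sysq p r q i) x \<ge> 1/3) \<and>
         (i \<noteq> 6 \<longrightarrow> affc (sysq p r q i) x \<le> 2/3) \<and>
         affc (sysq p r q i) x \<in> {0..1} \<and>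
         (i = 1 \<longrightarrow> affc (sysq p r q i) x \<le> 1/36) \<and>
         (i = 2 \<longrightarrow> affc (sysq p r q i) x \<in> {1/3..1/3+1/36}) \<and>
         (i = 3 \<longrightarrow> affc (sysq p r q i) x \<in> {1/2-1/36..1/2}) \<and>
         (i = 4 \<longrightarrow> affc (sysq p r q i) x \<in> {1/2-1/36..1/2}) \<and>
         (i = 5 \<longrightarrow> affc (sysq p r q i) x \<in> {2/3-1/36..2/3}) \<and>
         (i = 6 \<longrightarrow> affc (sysq p r q i) x \<in> {1-1/36..1})"
proof -
  have prods: "p*x \<le> p" "0 \<le> p*x" "r*x \<le> r" "0\<le>r*x" "q*x \<le> q" "0 \<le> q*x"
    using assms by (auto simp: mult_left_le)
  show ?thesis using assms by (auto simp: sysq_def affc_def algebra_simps) (use prods in linarith)+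
qed

lemma sysq_into:
  assumes "0<p" "p<1/36" "0<r" "r<1/36" "0<q" "q<1/36" "x\<in>{0..1}"
  shows "affc (sysq p r q i) x \<in> {0..1}"
proof -
  have prods: "p*x \<le> p" "0 \<le> p*x" "r*x \<le> r" "0\<le>r*x" "q*x \<le> q" "0 \<le> q*x"
    using assms by (auto simp: mult_left_le)
  show ?thesis using assms by (auto simp: sysq_def affc_def algebra_simps) (use prods in linarith)+
qed

lemma ifs_sys:
  assumes "0<p" "p<1/36" "0<r" "r<1/36" "0<q" "q<1/36"
  shows "ifs 6 (sysq p r q) (1/36) 1 0"
  unfolding ifs_def
proof (intro conjI allI impI)
  show "\<bar>fst (sysq p r q i)\<bar> \<le> 1/36" for i using assms by (intro sysq_fst_bound) auto
  show "affc (sysq p r q i) x \<in> {0..1}" if "x \<in> {0..1}" for i x using assms that by (intro sysq_into) auto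
  show "fst (sysq p r q i) \<noteq> 0" for i using assms by (intro sysq_nz) auto
  show "affc (sysq p r q 1) 0 = 0" by (simp add: sysq_def affc_def)
qed auto

lemma (in ifs) fixed_in_Xs:
  assumes "i \<in> {1..m}" "z \<in> {0..1}" "affc (f i) z = z"
  shows "z \<in> Xs m f"
proof -
  have "z \<in> Lv m f k" for k
  proof (induction k)
    case 0 then show ?case using assms by simp
  next
    case (Suc k)
    have "z \<in> affc (f i) ` Lv m f k" using Suc assms(3) by (metis image_eqI)
    then show ?case using assms(1) by auto
  qed
  then show ?thesis unfolding Xs_def by blast
qed

lemma wm01:
  assumes "0<p" "p<1/36" "0<r" "r<1/36" "0<q" "q<1/36" "x\<in>{0..1}"
  shows "wm (sysq p r q) w x \<in> {0..1}"
proof (induction w)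
  case Nil then show ?case using assms by simp
next
  case (Cons i w) then show ?case using sysq_into[OF assms(1-6)] by simp
qed

lemma wm_lip_t:
  assumes "0<p" "p \<le> \<rho>" "0<r" "r \<le> \<rho>" "0<q" "q \<le> \<rho>"
  shows "\<bar>wm (sysq p r q) w t - wm (sysq p r q) w t'\<bar> \<le> \<rho>^length w * \<bar>t-t'\<bar>"
proof (induction w)
  case Nil
  then show ?case by simp
next
  case (Cons i w)
  have "\<bar>wm (sysq p r q) (i#w) t - wm (sysq p r q) (i#w) t'\<bar>
        = \<bar>fst (sysq p r q i)\<bar> * \<bar>wm (sysq p r q) w t - wm (sysq p r q) w t'\<bar>"
    by (simp add: affc_diff abs_mult)
  also have "\<dots> \<le> \<rho> * (\<rho>^length w * \<bar>t-t'\<bar>)"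
  proof -
    have ci: "\<bar>fst (sysq p r q i)\<bar> \<le> \<rho>" using sysq_fst_bound[OF assms] .
    show ?thesis by (rule mult_mono[OF ci Cons]) (use assms in auto)
  qed
  finally show ?case by simp
qed

lemma wm_lip_q:
  assumes "0<p" "p<1/36" "0<r" "r<1/36" "0<q" "q<1/36" "0<q'" "q'<1/36" "t\<in>{0..1}"
  shows "\<bar>wm (sysq p r q) w t - wm (sysq p r q') w t\<bar> \<le> 2 * \<bar>q - q'\<bar>"
proof (induction w)
  case Nil
  then show ?case by simp
next
  case (Cons i w)
  define x where "x = wm (sysq p r q) w t"
  define x' where "x' = wm (sysq p r q') w t"
  have x01: "x \<in> {0..1}" "x' \<in> {0..1}" unfolding x_def x'_def using wm01 assms by auto
  have ih: "\<bar>x - x'\<bar> \<le> 2 * \<bar>q - q'\<bar>" using Cons unfolding x_def x'_def .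
  have "\<bar>affc (sysq p r q i) x - affc (sysq p r q' i) x'\<bar> \<le> 2 * \<bar>q - q'\<bar>"
  proof (cases "i = 3")
    case True
    have e: "affc (sysq p r q i) x - affc (sysq p r q' i) x' = q' * (x' - x) + (q' - q) * x"
      using True by (simp add: sysq_3 affc_def algebra_simps)
    have "\<bar>q' * (x' - x)\<bar> \<le> (1/36) * (2 * \<bar>q - q'\<bar>)"
      unfolding abs_mult using assms ih by (intro mult_mono) (auto simp: abs_minus_commute)
    moreover have "\<bar>(q' - q) * x\<bar> \<le> \<bar>q - q'\<bar> * 1"
      unfolding abs_mult using x01 by (intro mult_mono) (auto simp: abs_minus_commute)
    ultimately show ?thesis unfolding e by linarith
  next
    case False
    have e: "affc (sysq p r q i) x - affc (sysq p r q' i) x' = fst (sysq p r q i) * (x - x')"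
      using sysq_not3[OF False, of p r q q'] affc_diff by metis
    have "\<bar>fst (sysq p r q i) * (x - x')\<bar> \<le> 1 * (2 * \<bar>q - q'\<bar>)"
      unfolding abs_mult using ih sysq_fst_bound[of p 1 r q i] assms by (intro mult_mono) auto
    then show ?thesis unfolding e by simp
  qed
  then show ?case unfolding x_def x'_def by simp
qed



definition Rj :: "nat \<Rightarrow> real" where "Rj j = 1/36 - 1/(real j + 37)"
definition rhoj :: "real \<Rightarrow> real \<Rightarrow> nat \<Rightarrow> real" where "rhoj p r j = max (max p r) (Rj j)"

definition Bset :: "real \<Rightarrow> real \<Rightarrow> nat \<Rightarrow> nat \<Rightarrow> nat \<Rightarrow> nat list \<Rightarrow> nat list \<Rightarrow> real set" where
  "Bset p r n m j w w' = {q. 0 < q \<and> q \<le> Rj j \<and> (\<exists>t\<in>{0..1}. \<exists>s\<in>{0..1}.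
      wm (sysq p r q) w t \<ge> 1/3 \<and> 1 - wm (sysq p r q) w' s \<ge> 1/3 \<and>
      q * p^n * wm (sysq p r q) w t = r^(Suc m) * (1 - wm (sysq p r q) w' s))}"

definition Cset :: "real \<Rightarrow> real \<Rightarrow> nat \<Rightarrow> nat \<Rightarrow> nat \<Rightarrow> nat list \<Rightarrow> nat list \<Rightarrow> real set" where
  "Cset p r n m j w w' = (if Bset p r n m j w w' = {} then {}
      else cball (SOME q. q \<in> Bset p r n m j w w') (rhoj p r j ^ length w))"

definition Wk :: "nat \<Rightarrow> nat list set" where "Wk k = {w. set w \<subseteq> {1..6} \<and> length w = k}"

definition Uset :: "real \<Rightarrow> real \<Rightarrow> nat \<Rightarrow> nat \<Rightarrow> nat \<Rightarrow> nat \<Rightarrow> real set" where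
  "Uset p r n m j k = (\<Union>ww\<in>Wk k \<times> Wk k. Cset p r n m j (fst ww) (snd ww))"

definition Nset :: "real \<Rightarrow> real \<Rightarrow> real set" where
  "Nset p r = (\<Union>x. \<Inter>k. Uset p r (fst x) (fst (snd x)) (snd (snd x)) k)"

lemma Rj_bounds: "0 < Rj j" "Rj j < 1/36"
  unfolding Rj_def by (auto simp: field_simps)

lemma rhoj_bounds: "0 < p \<Longrightarrow> p < 1/36 \<Longrightarrow> 0 < r \<Longrightarrow> r < 1/36 \<Longrightarrow>
   p \<le> rhoj p r j \<and> r \<le> rhoj p r j \<and> Rj j \<le> rhoj p r j \<and> 0 < rhoj p r j \<and> rhoj p r j < 1/36"
  using Rj_bounds[of j] unfolding rhoj_def by auto

lemma diam_aux:
  assumes pr: "0<p" "p<1/36" "0<r" "r<1/36"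
    and q1: "q1 \<in> Bset p r n m j w w'" and q2: "q2 \<in> Bset p r n m j w w'"
    and len: "length w = k" "length w' = k" and le: "q1 \<le> q2"
  shows "q2 - q1 \<le> rhoj p r j ^ k"
proof -
  define \<rho> where "\<rho> = rhoj p r j"
  have rb: "p \<le> \<rho>" "r \<le> \<rho>" "Rj j \<le> \<rho>" "0 < \<rho>" "\<rho> < 1/36"
    using rhoj_bounds[OF pr, of j] unfolding \<rho>_def by auto
  from q1 obtain t1 s1 where q1b: "0 < q1" "q1 \<le> Rj j" "t1 \<in> {0..1}" "s1 \<in> {0..1}"
    "wm (sysq p r q1) w t1 \<ge> 1/3" "1 - wm (sysq p r q1) w' s1 \<ge> 1/3"
    "q1 * p^n * wm (sysq p r q1) w t1 = r^(Suc m) * (1 - wm (sysq p r q1) w' s1)"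
    unfolding Bset_def by blast
  from q2 obtain t2 s2 where q2b: "0 < q2" "q2 \<le> Rj j" "t2 \<in> {0..1}" "s2 \<in> {0..1}"
    "wm (sysq p r q2) w t2 \<ge> 1/3" "1 - wm (sysq p r q2) w' s2 \<ge> 1/3"
    "q2 * p^n * wm (sysq p r q2) w t2 = r^(Suc m) * (1 - wm (sysq p r q2) w' s2)"
    unfolding Bset_def by blast
  have q1l: "q1 < 1/36" and q2l: "q2 < 1/36" using q1b(2) q2b(2) Rj_bounds[of j] by auto
  define a1 where "a1 = wm (sysq p r q1) w t1"
  define a2 where "a2 = wm (sysq p r q2) w t2"
  define b1 where "b1 = 1 - wm (sysq p r q1) w' s1"
  define b2 where "b2 = 1 - wm (sysq p r q2) w' s2"
  define P where "P = p^n"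
  define R where "R = r^(Suc m)"
  define d where "d = q2 - q1"
  define E where "E = \<rho>^k"
  have Ppos: "P > 0" unfolding P_def using pr by simp
  have Rpos: "R \<ge> 0" unfolding R_def using pr by simp
  have Epos: "E \<ge> 0" unfolding E_def using rb by simp
  have dpos: "d \<ge> 0" unfolding d_def using le by simp
  have a2l: "a2 \<ge> 1/3" using q2b(5) unfolding a2_def .
  have b1l: "b1 \<ge> 1/3" using q1b(6) unfolding b1_def .
  have a1u: "a1 \<le> 1" unfolding a1_def using wm01[OF pr q1b(1) q1l q1b(3)] by simp
  have eq1: "q1 * P * a1 = R * b1" using q1b(7) unfolding a1_def b1_def P_def R_def .
  have eq2: "q2 * P * a2 = R * b2" using q2b(7) unfolding a2_def b2_def P_def R_def .
  have lipA: "\<bar>a1 - a2\<bar> \<le> 2 * d + E"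
  proof -
    have "\<bar>a1 - wm (sysq p r q2) w t1\<bar> \<le> 2 * \<bar>q1 - q2\<bar>"
      unfolding a1_def using wm_lip_q[OF pr q1b(1) q1l q2b(1) q2l q1b(3)] .
    moreover have "\<bar>wm (sysq p r q2) w t1 - a2\<bar> \<le> \<rho>^length w * \<bar>t1 - t2\<bar>"
      unfolding a2_def using wm_lip_t[OF pr(1) rb(1) pr(3) rb(2) q2b(1)] q2b(2) rb(3) by simp
    moreover have "\<rho>^length w * \<bar>t1 - t2\<bar> \<le> E * 1"
      unfolding E_def len using q1b(3) q2b(3) rb by (intro mult_left_mono) auto
    moreover have "\<bar>a1 - a2\<bar> \<le> \<bar>a1 - wm (sysq p r q2) w t1\<bar> + \<bar>wm (sysq p r q2) w t1 - a2\<bar>"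
      by (smt (verit))
    moreover have "\<bar>q1 - q2\<bar> = q2 - q1" using le by simp
    ultimately show ?thesis unfolding d_def by (smt (verit))
  qed
  have lipB: "\<bar>b1 - b2\<bar> \<le> 2 * d + E"
  proof -
    have "\<bar>wm (sysq p r q1) w' s1 - wm (sysq p r q2) w' s1\<bar> \<le> 2 * \<bar>q1 - q2\<bar>"
      using wm_lip_q[OF pr q1b(1) q1l q2b(1) q2l q1b(4)] .
    moreover have "\<bar>wm (sysq p r q2) w' s1 - wm (sysq p r q2) w' s2\<bar> \<le> \<rho>^length w' * \<bar>s1 - s2\<bar>"
      using wm_lip_t[OF pr(1) rb(1) pr(3) rb(2) q2b(1)] q2b(2) rb(3) by simp
    moreover have "\<rho>^length w' * \<bar>s1 - s2\<bar> \<le> E * 1"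
      unfolding E_def len using q1b(4) q2b(4) rb by (intro mult_left_mono) auto
    moreover have "\<bar>b1 - b2\<bar> \<le> \<bar>wm (sysq p r q1) w' s1 - wm (sysq p r q2) w' s1\<bar> + \<bar>wm (sysq p r q2) w' s1 - wm (sysq p r q2) w' s2\<bar>"
      unfolding b1_def b2_def by (smt (verit))
    moreover have "\<bar>q1 - q2\<bar> = q2 - q1" using le by simp
    ultimately show ?thesis unfolding d_def by (smt (verit))
  qed
  have key: "d * P * a2 = R * (b2 - b1) + q1 * P * (a1 - a2)"
    unfolding d_def using eq1 eq2 by (simp add: algebra_simps)
  have Rb: "R \<le> 3 * q1 * P"
  proof -
    have "R * (1/3) \<le> R * b1" using b1l Rpos by (intro mult_left_mono) auto
    also have "\<dots> = q1 * P * a1" using eq1 by simp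
    also have "\<dots> \<le> q1 * P * 1" using a1u q1b(1) Ppos by (intro mult_left_mono) auto
    finally show ?thesis by simp
  qed
  have h1: "d * P * a2 \<le> R * \<bar>b2 - b1\<bar> + q1 * P * \<bar>a1 - a2\<bar>"
  proof -
    have "R * (b2 - b1) \<le> R * \<bar>b2 - b1\<bar>" using Rpos by (intro mult_left_mono) auto
    moreover have "q1 * P * (a1 - a2) \<le> q1 * P * \<bar>a1 - a2\<bar>" using q1b(1) Ppos by (intro mult_left_mono) auto
    ultimately show ?thesis using key by linarith
  qed
  have h2: "R * \<bar>b2 - b1\<bar> \<le> (3 * q1 * P) * (2 * d + E)"
    using Rb lipB Rpos q1b(1) Ppos by (intro mult_mono) (auto simp: abs_minus_commute)
  have h3: "q1 * P * \<bar>a1 - a2\<bar> \<le> q1 * P * (2 * d + E)"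
    using lipA q1b(1) Ppos by (intro mult_left_mono) auto
  have h4: "d * P * (1/3) \<le> d * P * a2"
    using a2l dpos Ppos by (intro mult_left_mono) auto
  have h5: "q1 * P * (2 * d + E) \<le> (1/36) * P * (2 * d + E)"
    using q1l Ppos dpos Epos by (intro mult_right_mono) auto
  have "P * (d * (1/3)) \<le> P * ((1/9) * (2 * d + E))"
    using h1 h2 h3 h4 h5 by (simp add: algebra_simps)
  then have "d * (1/3) \<le> (1/9) * (2 * d + E)" using Ppos by simp
  then have "d \<le> E" by simp
  then show ?thesis unfolding d_def E_def \<rho>_def .
qed

lemma diam:
  assumes pr: "0<p" "p<1/36" "0<r" "r<1/36"
    and q1: "q1 \<in> Bset p r n m j w w'" and q2: "q2 \<in> Bset p r n m j w w'"
    and len: "length w = length w'"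
  shows "dist q1 q2 \<le> rhoj p r j ^ length w"
proof (cases "q1 \<le> q2")
  case True
  then show ?thesis using diam_aux[OF pr q1 q2 refl len[symmetric] True] by (simp add: dist_real_def)
next
  case False
  then show ?thesis using diam_aux[OF pr q2 q1 refl len[symmetric]] by (simp add: dist_real_def)
qed



lemma Cset_closed: "closed (Cset p r n m j w w')"
  unfolding Cset_def by auto

lemma Cset_measure:
  assumes "0<p" "p<1/36" "0<r" "r<1/36"
  shows "emeasure lborel (Cset p r n m j w w') \<le> ennreal (2 * rhoj p r j ^ length w)"
proof (cases "Bset p r n m j w w' = {}")
  case True then show ?thesis unfolding Cset_def by simp
next
  case False
  define c where "c = (SOME q. q \<in> Bset p r n m j w w')"
  define e where "e = rhoj p r j ^ length w"
  have e0: "e \<ge> 0" unfolding e_def using rhoj_bounds[OF assms, of j] by simp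
  have "Cset p r n m j w w' = {c - e .. c + e}"
    unfolding Cset_def c_def e_def using False by (simp add: cball_eq_atLeastAtMost)
  moreover have "emeasure lborel {c - e .. c + e} = ennreal (2 * e)"
    using e0 by simp
  ultimately show ?thesis unfolding e_def by simp
qed

lemma Bset_sub_Cset:
  assumes "0<p" "p<1/36" "0<r" "r<1/36" "length w = length w'"
  shows "Bset p r n m j w w' \<subseteq> Cset p r n m j w w'"
proof
  fix q assume q: "q \<in> Bset p r n m j w w'"
  then have ne: "Bset p r n m j w w' \<noteq> {}" by blast
  define c where "c = (SOME q. q \<in> Bset p r n m j w w')"
  have c: "c \<in> Bset p r n m j w w'" unfolding c_def using q by (rule someI)
  have "dist c q \<le> rhoj p r j ^ length w" using diam[OF assms(1-4) c q assms(5)] .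
  then show "q \<in> Cset p r n m j w w'" unfolding Cset_def using ne by (simp add: c_def)
qed

lemma finite_Wk: "finite (Wk k)"
  unfolding Wk_def by (rule finite_lists_length_eq) simp

lemma card_Wk: "card (Wk k) = 6^k"
  unfolding Wk_def by (subst card_lists_length_eq) simp_all

lemma Uset_closed: "closed (Uset p r n m j k)"
  unfolding Uset_def using finite_Wk Cset_closed by (intro closed_UN) auto

lemma Uset_measure:
  assumes "0<p" "p<1/36" "0<r" "r<1/36"
  shows "emeasure lborel (Uset p r n m j k) \<le> ennreal (2 * (36 * rhoj p r j) ^ k)"
proof -
  define I where "I = Wk k \<times> Wk k"
  have fin: "finite I" unfolding I_def using finite_Wk by simp
  have cardI: "card I = 36^k" unfolding I_def by (simp add: card_cartesian_product card_Wk power_mult_distrib[symmetric])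
  have "emeasure lborel (Uset p r n m j k) \<le> (\<Sum>ww\<in>I. emeasure lborel (Cset p r n m j (fst ww) (snd ww)))"
    unfolding Uset_def I_def[symmetric]
    by (rule emeasure_subadditive_finite[OF fin]) (use Cset_closed in auto)
  also have "\<dots> \<le> (\<Sum>ww\<in>I. ennreal (2 * rhoj p r j ^ k))"
  proof (rule sum_mono)
    fix ww assume "ww \<in> I"
    then have "length (fst ww) = k" unfolding I_def Wk_def by auto
    then show "emeasure lborel (Cset p r n m j (fst ww) (snd ww)) \<le> ennreal (2 * rhoj p r j ^ k)"
      using Cset_measure[OF assms] by metis
  qed
  also have "\<dots> = ennreal (\<Sum>ww\<in>I. 2 * rhoj p r j ^ k)"
    using rhoj_bounds[OF assms, of j] by (intro sum_ennreal) simp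
  also have "(\<Sum>ww\<in>I. 2 * rhoj p r j ^ k) = 2 * (36 * rhoj p r j) ^ k"
    using cardI by (simp add: power_mult_distrib)
  finally show ?thesis .
qed

lemma Inter_null:
  assumes "0<p" "p<1/36" "0<r" "r<1/36"
  shows "(\<Inter>k. Uset p r n m j k) \<in> null_sets lborel"
proof (rule null_setsI)
  show "(\<Inter>k. Uset p r n m j k) \<in> sets lborel"
    using Uset_closed by (simp add: borel_closed closed_INT)
  define \<rho> where "\<rho> = rhoj p r j"
  have rb: "0 < \<rho>" "\<rho> < 1/36" using rhoj_bounds[OF assms, of j] unfolding \<rho>_def by auto
  have "emeasure lborel (\<Inter>k. Uset p r n m j k) \<le> 0"
  proof (rule ennreal_le_epsilon)
    fix e :: real assume e: "0 < e"
    have "36 * \<rho> < 1" using rb by simp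
    then obtain k where k: "(36 * \<rho>)^k < e/2" using real_arch_pow_inv[of "e/2" "36*\<rho>"] e by auto
    have "emeasure lborel (\<Inter>k. Uset p r n m j k) \<le> emeasure lborel (Uset p r n m j k)"
      by (rule emeasure_mono) (use Uset_closed in \<open>auto simp: borel_closed\<close>)
    also have "\<dots> \<le> ennreal (2 * (36 * \<rho>) ^ k)" unfolding \<rho>_def by (rule Uset_measure[OF assms])
    also have "\<dots> \<le> ennreal e" using k by (intro ennreal_leI) simp
    finally show "emeasure lborel (\<Inter>k. Uset p r n m j k) \<le> 0 + ennreal e" by simp
  qed
  then show "emeasure lborel (\<Inter>k. Uset p r n m j k) = 0" by simp
qed

lemma Nset_null:
  assumes "0<p" "p<1/36" "0<r" "r<1/36"
  shows "Nset p r \<in> null_sets lborel"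
  unfolding Nset_def using Inter_null[OF assms] by (intro null_sets_UN) auto



lemma acomp_assoc: "acomp (acomp f g) h = acomp f (acomp g h)"
  by (simp add: acomp_def algebra_simps)

lemma word_map_Nil[simp]: "word_map S [] = (1,0)" and word_map_Cons[simp]: "word_map S (i#w) = acomp (S i) (word_map S w)"
  by (simp_all add: word_map_def)

lemma word_map_append: "word_map S (u @ v) = acomp (word_map S u) (word_map S v)"
  by (induction u) (simp_all add: acomp_assoc, simp add: acomp_def)

lemma word_map_rep1: "word_map (sysq p r q) (replicate n 1) = (p^n, 0)"
  by (induction n) (simp_all add: acomp_def sysq_def)

lemma word_map_rep6: "word_map (sysq p r q) (replicate n 6) = (r^n, 1 - r^n)"
  by (induction n) (simp_all add: acomp_def sysq_def algebra_simps)

lemma density: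
  fixes \<alpha> \<beta> t \<delta> :: real
  assumes a: "\<alpha> > 0" and b: "\<beta> > 0" and irr: "\<beta>/\<alpha> \<notin> \<rat>" and d: "\<delta> > 0"
  shows "\<exists>n M::nat. M \<ge> 1 \<and> t - \<delta> < real n * \<beta> - real M * \<alpha> \<and> real n * \<beta> - real M * \<alpha> < t"
proof -
  define \<theta> where "\<theta> = \<beta>/\<alpha>"
  obtain k where k: "k > 0" "\<bar>frac (real k * \<theta>) - 0\<bar> < \<delta>/\<alpha>"
    using Kronecker_approx_1_explicit[of \<theta> 0 "\<delta>/\<alpha>"] irr a d unfolding \<theta>_def by auto
  have fnz: "frac (real k * \<theta>) \<noteq> 0"
  proof
    assume "frac (real k * \<theta>) = 0"
    then have "real k * \<theta> \<in> \<int>" by (simp add: frac_eq_0_iff)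
    then have "real k * \<theta> \<in> \<rat>" using Ints_subset_Rats by blast
    then have "(real k * \<theta>) / real k \<in> \<rat>" by (intro Rats_divide) auto
    then show False using irr k(1) unfolding \<theta>_def by simp
  qed
  have fpos: "0 < frac (real k * \<theta>)" using fnz frac_ge_0[of "real k * \<theta>"] by linarith
  have flt: "frac (real k * \<theta>) < \<delta>/\<alpha>" using k(2) fpos by simp
  have kt0: "real k * \<theta> \<ge> 0" unfolding \<theta>_def using a b by simp
  define a' where "a' = nat \<lfloor>real k * \<theta>\<rfloor>"
  have a'eq: "real a' = real_of_int \<lfloor>real k * \<theta>\<rfloor>" unfolding a'_def using kt0 by simp
  define s where "s = real k * \<beta> - real a' * \<alpha>"
  have s_eq: "s = \<alpha> * frac (real k * \<theta>)"
    unfolding s_def a'eq frac_def \<theta>_def using a by (simp add: field_simps)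
  have s0: "0 < s" using s_eq a fpos by simp
  have sd: "s < \<delta>" using s_eq flt a by (simp add: field_simps)
  define A where "A = nat \<lceil>-t/\<alpha>\<rceil> + 1"
  have "real A \<ge> -t/\<alpha> + 1" unfolding A_def by linarith
  then have "real A * \<alpha> \<ge> (-t/\<alpha> + 1) * \<alpha>" using a by (intro mult_right_mono) auto
  moreover have "(-t/\<alpha> + 1) * \<alpha> = -t + \<alpha>" using a by (simp add: field_simps)
  ultimately have Aa: "real A * \<alpha> > -t" using a by linarith
  define y where "y = (t + real A * \<alpha>) / s"
  have y0: "y > 0" unfolding y_def using Aa s0 by simp
  define j where "j = nat (\<lceil>y\<rceil> - 1)"
  have jeq: "real j = real_of_int \<lceil>y\<rceil> - 1" unfolding j_def using y0 by simp
  have j1: "real j < y" "y \<le> real j + 1" using jeq by linarith+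
  have js1: "real j * s < t + real A * \<alpha>" using j1(1) s0 unfolding y_def by (simp add: field_simps)
  have js2: "t + real A * \<alpha> \<le> real j * s + s" using j1(2) s0 unfolding y_def by (simp add: field_simps)
  have val: "real (j*k) * \<beta> - real (A + j*a') * \<alpha> = real j * s - real A * \<alpha>"
    unfolding s_def by (simp add: algebra_simps)
  show ?thesis
  proof (intro exI conjI)
    show "1 \<le> A + j*a'" unfolding A_def by simp
    show "t - \<delta> < real (j*k) * \<beta> - real (A + j*a') * \<alpha>" unfolding val using js2 sd by linarith
    show "real (j*k) * \<beta> - real (A + j*a') * \<alpha> < t" unfolding val using js1 by linarith
  qed
qed

lemma nonWSP:
  assumes pr: "0<p" "p<1/36" "0<r" "r<1/36" and q: "0<q" "q<1/36" and irr: "ln p / ln r \<notin> \<rat>"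
  shows "\<not> weak_separation 6 (sysq p r q)"
proof -
  define \<alpha> where "\<alpha> = - ln r"
  define \<beta> where "\<beta> = - ln p"
  have a0: "\<alpha> > 0" unfolding \<alpha>_def using pr by simp
  have b0: "\<beta> > 0" unfolding \<beta>_def using pr by simp
  have irr': "\<beta>/\<alpha> \<notin> \<rat>" unfolding \<alpha>_def \<beta>_def using irr by simp
  have "(1, 0) \<in> closure (WSP_family 6 (sysq p r q) - {(1, 0)})"
    unfolding closure_approachable
  proof (intro allI impI)
    fix e :: real assume e: "e > 0"
    define C where "C = 1 + 2/(3*r)"
    have "2/(3*r) > 0" using pr by simp
    then have C0: "C > 0" unfolding C_def by linarith
    define \<delta> where "\<delta> = e / (2*C)"
    have d0: "\<delta> > 0" unfolding \<delta>_def using e C0 by simp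
    obtain n M where nM: "M \<ge> 1" "ln q - \<delta> < real n * \<beta> - real M * \<alpha>" "real n * \<beta> - real M * \<alpha> < ln q"
      using density[OF a0 b0 irr' d0, of "ln q"] by blast
    define m where "m = M - 1"
    have Mm: "M = Suc m" unfolding m_def using nM(1) by simp
    define c where "c = r^(Suc m) / (q * p^n)"
    have rM: "r^(Suc m) = exp (- real M * \<alpha>)"
    proof -
      have "exp (- real M * \<alpha>) = exp (real M * ln r)" unfolding \<alpha>_def by simp
      also have "\<dots> = exp (ln r) ^ M" by (rule exp_of_nat_mult)
      also have "\<dots> = r ^ M" using pr by simp
      finally show ?thesis using Mm by simp
    qed
    have pn: "p^n = exp (- real n * \<beta>)"
    proof -
      have "exp (- real n * \<beta>) = exp (real n * ln p)" unfolding \<beta>_def by simp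
      also have "\<dots> = exp (ln p) ^ n" by (rule exp_of_nat_mult)
      also have "\<dots> = p ^ n" using pr by simp
      finally show ?thesis by simp
    qed
    have qe: "q = exp (ln q)" using q by simp
    have ceq: "c = exp (real n * \<beta> - real M * \<alpha> - ln q)"
    proof -
      have "real n*\<beta> - real M*\<alpha> - ln q = (- real M * \<alpha>) - ((- real n * \<beta>) + ln q)" by simp
      then have "exp (real n*\<beta> - real M*\<alpha> - ln q) = exp (- real M * \<alpha>) / (exp (- real n * \<beta>) * exp (ln q))"
        by (simp only: exp_diff exp_add)
      then show ?thesis unfolding c_def rM pn using q by simp
    qed
    have c1: "c < 1" unfolding ceq using nM(3) by simp
    have c2: "c \<ge> 1 - \<delta>"
    proof -
      have "exp (- \<delta>) \<le> c" unfolding ceq using nM(2) by simp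
      moreover have "1 + (-\<delta>) \<le> exp (-\<delta>)" by (rule exp_ge_add_one_self)
      ultimately show ?thesis by linarith
    qed
    define u :: "nat list" where "u = 3 # replicate n 1 @ [5]"
    define v :: "nat list" where "v = 4 # replicate m 6 @ [2]"
    have Uw: "word_map (sysq p r q) u = (q * p^n * r, 1/2 - 2 * q * p^n / 3)"
      unfolding u_def append_Cons word_map_Cons word_map_append word_map_rep1 by (simp add: acomp_def sysq_def)
    have Vw: "word_map (sysq p r q) v = (r^(Suc (Suc m)), r * (r^m/3 + 1 - r^m) + 1/2 - r)"
      unfolding v_def append_Cons word_map_Cons word_map_append word_map_rep6 by (simp add: acomp_def sysq_def algebra_simps)
    define y where "y = acomp (ainv (word_map (sysq p r q) u)) (word_map (sysq p r q) v)"
    have yeq: "y = (c, 2 * (1 - c) / (3 * r))"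
      unfolding y_def Uw Vw c_def using pr q by (simp add: acomp_def ainv_def field_simps)
    have yin: "y \<in> WSP_family 6 (sysq p r q)"
      unfolding WSP_family_def y_def by (intro CollectI exI[of _ u] exI[of _ v]) (auto simp: u_def v_def)
    have yne: "y \<noteq> (1, 0)" unfolding yeq using c1 by simp
    have "dist y (1, 0) \<le> \<bar>c - 1\<bar> + \<bar>2 * (1 - c) / (3 * r) - 0\<bar>"
      unfolding yeq dist_Pair_Pair dist_real_def
      by (simp only: power2_abs) (rule sqrt_sum_squares_le_sum_abs)
    also have "\<dots> = (1 - c) * C" unfolding C_def using c1 pr by (simp add: field_simps)
    also have "\<dots> \<le> \<delta> * C" using c2 C0 by (intro mult_right_mono) auto
    also have "\<dots> < e" unfolding \<delta>_def using C0 e by simp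
    finally show "\<exists>y\<in>WSP_family 6 (sysq p r q) - {(1, 0)}. dist y (1, 0) < e"
      using yin yne by blast
  qed
  then show ?thesis unfolding weak_separation_def by simp
qed



lemma decomp_a:
  assumes pr: "0<p" "p<1/36" "0<r" "r<1/36" and q: "0<q" "q<1/36"
    and K01: "K \<subseteq> {0..1}"
    and Kinv: "\<And>x. x\<in>K \<Longrightarrow> \<exists>i\<in>{1..6}. \<exists>z\<in>K. x = affc (sysq p r q i) z"
    and y: "y \<in> K" "y > 0"
  shows "\<exists>n a'. a' \<in> K \<and> a' \<ge> 1/3 \<and> y = p^n * a'"
proof -
  have claim: "\<forall>y\<in>K. (\<exists>n a'. a' \<in> K \<and> a' \<ge> 1/3 \<and> y = p^n * a') \<or> (\<exists>y'\<in>K. y = p^N * y')" for N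
  proof (induction N)
    case 0 then show ?case by auto
  next
    case (Suc N)
    show ?case
    proof
      fix y assume yK: "y \<in> K"
      from Suc yK consider "\<exists>n a'. a' \<in> K \<and> a' \<ge> 1/3 \<and> y = p^n * a'" | y' where "y'\<in>K" "y = p^N * y'"
        by blast
      then show "(\<exists>n a'. a' \<in> K \<and> a' \<ge> 1/3 \<and> y = p^n * a') \<or> (\<exists>y'\<in>K. y = p^Suc N * y')"
      proof cases
        case 1 then show ?thesis by blast
      next
        case 2
        from Kinv[OF 2(1)] obtain i z where iz: "i\<in>{1..6}" "z\<in>K" "y' = affc (sysq p r q i) z" by blast
        have z01: "z \<in> {0..1}" using iz(2) K01 by blast
        note R = sysq_range[OF pr q z01 iz(1)]
        show ?thesis
        proof (cases "i = 1")
          case True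
          then have "y = p^Suc N * z" using R 2(2) iz(3) by simp
          then show ?thesis using iz(2) by blast
        next
          case False
          then have "y' \<ge> 1/3" using R iz(3) by simp
          then show ?thesis using 2 by blast
        qed
      qed
    qed
  qed
  obtain N where N: "p^N < y" using real_arch_pow_inv[OF y(2), of p] pr by auto
  show ?thesis
  proof (rule ccontr)
    assume "\<not> ?thesis"
    then obtain y' where y': "y' \<in> K" "y = p^N * y'" using claim[of N] y(1) by blast
    have "y' \<le> 1" using y'(1) K01 by auto
    then have "p^N * y' \<le> p^N * 1" using pr by (intro mult_left_mono) auto
    then show False using y' N by simp
  qed
qed

lemma decomp_b:
  assumes pr: "0<p" "p<1/36" "0<r" "r<1/36" and q: "0<q" "q<1/36"
    and K01: "K \<subseteq> {0..1}"
    and Kinv: "\<And>x. x\<in>K \<Longrightarrow> \<exists>i\<in>{1..6}. \<exists>z\<in>K. x = affc (sysq p r q i) z"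
    and y: "y \<in> K" "y < 1"
  shows "\<exists>n b'. b' \<in> K \<and> 1 - b' \<ge> 1/3 \<and> 1 - y = r^n * (1 - b')"
proof -
  have claim: "\<forall>y\<in>K. (\<exists>n b'. b' \<in> K \<and> 1 - b' \<ge> 1/3 \<and> 1 - y = r^n * (1 - b')) \<or> (\<exists>y'\<in>K. 1 - y = r^N * (1 - y'))" for N
  proof (induction N)
    case 0 then show ?case by auto
  next
    case (Suc N)
    show ?case
    proof
      fix y assume yK: "y \<in> K"
      from Suc yK consider "\<exists>n b'. b' \<in> K \<and> 1 - b' \<ge> 1/3 \<and> 1 - y = r^n * (1 - b')" | y' where "y'\<in>K" "1 - y = r^N * (1 - y')"
        by blast
      then show "(\<exists>n b'. b' \<in> K \<and> 1 - b' \<ge> 1/3 \<and> 1 - y = r^n * (1 - b')) \<or> (\<exists>y'\<in>K. 1 - y = r^Suc N * (1 - y'))"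
      proof cases
        case 1 then show ?thesis by blast
      next
        case 2
        from Kinv[OF 2(1)] obtain i z where iz: "i\<in>{1..6}" "z\<in>K" "y' = affc (sysq p r q i) z" by blast
        have z01: "z \<in> {0..1}" using iz(2) K01 by blast
        note R = sysq_range[OF pr q z01 iz(1)]
        show ?thesis
        proof (cases "i = 6")
          case True
          then have "1 - y' = r * (1 - z)" using R iz(3) by simp
          then have "1 - y = r^Suc N * (1 - z)" using 2(2) by simp
          then show ?thesis using iz(2) by blast
        next
          case False
          then have "1 - y' \<ge> 1/3" using R iz(3) by simp
          then show ?thesis using 2 by blast
        qed
      qed
    qed
  qed
  have y1: "1 - y > 0" using y(2) by simp
  obtain N where N: "r^N < 1 - y" using real_arch_pow_inv[OF y1, of r] pr by auto
  show ?thesis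
  proof (rule ccontr)
    assume "\<not> ?thesis"
    then obtain y' where y': "y' \<in> K" "1 - y = r^N * (1 - y')" using claim[of N] y(1) by blast
    have "1 - y' \<le> 1" using y'(1) K01 by auto
    then have "r^N * (1 - y') \<le> r^N * 1" using pr by (intro mult_left_mono) auto
    then show False using y' N by simp
  qed
qed

lemma exists_Rj: assumes "0 < q" "q < 1/36" shows "\<exists>j. q \<le> Rj j"
proof -
  define D where "D = 1/36 - q"
  have D0: "D > 0" unfolding D_def using assms by simp
  define j where "j = nat \<lceil>1/D\<rceil>"
  have "real j \<ge> 1/D" unfolding j_def by linarith
  then have "real j + 37 \<ge> 1/D" by simp
  then have "1/(real j + 37) \<le> 1/(1/D)" using D0 by (intro divide_left_mono) auto
  then have "1/(real j + 37) \<le> D" using D0 by simp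
  then show ?thesis unfolding Rj_def D_def by (intro exI[of _ j]) simp
qed



definition lo :: "nat \<Rightarrow> real" where
  "lo i = (if i = 1 then 0 else if i = 2 then 1/3 else if i = 3 \<or> i = 4 then 1/2-1/36 else if i = 5 then 2/3-1/36 else 1-1/36)"
definition hi :: "nat \<Rightarrow> real" where
  "hi i = (if i = 1 then 1/36 else if i = 2 then 1/3+1/36 else if i = 3 \<or> i = 4 then 1/2 else if i = 5 then 2/3 else 1)"

lemma lohi:
  assumes "0<p" "p<1/36" "0<r" "r<1/36" "0<q" "q<1/36" "z\<in>{0..1}" "i \<in> {1..6}"
  shows "lo i \<le> affc (sysq p r q i) z \<and> affc (sysq p r q i) z \<le> hi i"
proof -
  note R = sysq_range[OF assms]
  have i6: "i = 1 \<or> i = 2 \<or> i = 3 \<or> i = 4 \<or> i = 5 \<or> i = 6" using assms(8) by auto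
  then show ?thesis
  proof (elim disjE)
    assume "i = 1" then show ?thesis using R unfolding lo_def hi_def by simp
  next
    assume "i = 2" then show ?thesis using R unfolding lo_def hi_def by simp
  next
    assume "i = 3" then show ?thesis using R unfolding lo_def hi_def by simp
  next
    assume "i = 4" then show ?thesis using R unfolding lo_def hi_def by simp
  next
    assume "i = 5" then show ?thesis using R unfolding lo_def hi_def by simp
  next
    assume "i = 6" then show ?thesis using R unfolding lo_def hi_def by simp
  qed
qed

lemma lohi_sep:
  assumes "i \<in> {1..6}" "j \<in> {1..6}" "i \<noteq> j" "{i, j} \<noteq> {3::nat, 4}"
  shows "hi i < lo j \<or> hi j < lo i"
proof -
  have i6: "i = 1 \<or> i = 2 \<or> i = 3 \<or> i = 4 \<or> i = 5 \<or> i = 6" using assms(1) by auto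
  have j6: "j = 1 \<or> j = 2 \<or> j = 3 \<or> j = 4 \<or> j = 5 \<or> j = 6" using assms(2) by auto
  have n34: "\<not> (i = 3 \<and> j = 4)" "\<not> (i = 4 \<and> j = 3)" using assms(4) by auto
  show ?thesis using i6 j6 assms(3) n34 by (elim disjE) (simp_all add: lo_def hi_def)
qed

lemma in_Nset:
  assumes pr: "0<p" "p<1/36" "0<r" "r<1/36" and q: "0<q" "q<1/36"
    and KL: "\<And>k. K \<subseteq> Lv 6 (sysq p r q) k"
    and a: "a' \<in> K" "a' \<ge> 1/3" and b: "b' \<in> K" "1 - b' \<ge> 1/3"
    and eq: "q * p^n * a' = r^(Suc m) * (1 - b')"
  shows "q \<in> Nset p r"
proof -
  interpret ifs 6 "sysq p r q" "1/36" 1 0 using ifs_sys[OF pr q] .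
  obtain j where j: "q \<le> Rj j" using exists_Rj[OF q] by blast
  have "q \<in> Uset p r n m j k" for k
  proof -
    obtain w t where wt: "length w = k" "set w \<subseteq> {1..6}" "t\<in>{0..1}" "a' = wm (sysq p r q) w t"
      using Lv_words KL a(1) by blast
    obtain w' s where ws: "length w' = k" "set w' \<subseteq> {1..6}" "s\<in>{0..1}" "b' = wm (sysq p r q) w' s"
      using Lv_words KL b(1) by blast
    have "q \<in> Bset p r n m j w w'"
      unfolding Bset_def using q(1) j wt ws a b eq by blast
    moreover have "length w = length w'" using wt(1) ws(1) by simp
    ultimately have "q \<in> Cset p r n m j w w'" using Bset_sub_Cset[OF pr] by blast
    moreover have "(w, w') \<in> Wk k \<times> Wk k" unfolding Wk_def using wt ws by auto
    ultimately show ?thesis unfolding Uset_def by (intro UN_I[of "(w, w')"]) simp_all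
  qed
  then show ?thesis unfolding Nset_def by (intro UN_I[of "(n, m, j)"]) simp_all
qed

theorem mainTheorem14:
  fixes p r :: real
  assumes "0 < p" "p < 1/36" "0 < r" "r < 1/36"
    and "ln p / ln r \<notin> \<rat>"
  shows "\<exists>N \<in> null_sets lborel. \<forall>q \<in> {0<..<1/36} - N.
     (let K = attractor 6 (sysq p r q); P = (\<lambda>i. affc (sysq p r q i) ` K) in
       P 3 \<inter> P 4 = {1/2} \<and>
       (\<forall>i\<in>{1..6}. \<forall>j\<in>{1..6}. i \<noteq> j \<and> {i, j} \<noteq> {3, 4} \<longrightarrow> P i \<inter> P j = {}) \<and>
       \<not> weak_separation 6 (sysq p r q))"
proof (intro bexI[of _ "Nset p r"] ballI)
  show "Nset p r \<in> null_sets lborel" using Nset_null assms(1-4) by blast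
next
  fix q assume qN: "q \<in> {0<..<1/36} - Nset p r"
  have pr: "0<p" "p<1/36" "0<r" "r<1/36" using assms by auto
  have q: "0 < q" "q < 1/36" using qN by auto
  have notN: "q \<notin> Nset p r" using qN by auto
  interpret ifs 6 "sysq p r q" "1/36" 1 0 using ifs_sys[OF pr q] .
  define K where "K = attractor 6 (sysq p r q)"
  define P where "P = (\<lambda>i. affc (sysq p r q i) ` K)"
  have KX: "K = Xs 6 (sysq p r q)" unfolding K_def by (rule attractor_eq)
  have K01: "K \<subseteq> {0..1}" unfolding KX by (rule Xs_sub01)
  have KL: "K \<subseteq> Lv 6 (sysq p r q) k" for k unfolding KX Xs_def by blast
  have Kinv: "\<exists>i\<in>{1..6}. \<exists>z\<in>K. x = affc (sysq p r q i) z" if "x \<in> K" for x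
  proof -
    have "x \<in> (\<Union>i\<in>{1..6}. affc (sysq p r q i) ` Xs 6 (sysq p r q))"
      using equalityD1[OF Xs_inv] that unfolding KX by (rule subsetD)
    then show ?thesis unfolding KX by blast
  qed
  have K0: "0 \<in> K" unfolding KX by (rule fixed_in_Xs[of 1]) (auto simp: sysq_def affc_def)
  have K1: "1 \<in> K" unfolding KX by (rule fixed_in_Xs[of 6]) (auto simp: sysq_def affc_def)
  have Pmem: "\<exists>z\<in>K. x = affc (sysq p r q i) z" if "x \<in> P i" for x i
    using that unfolding P_def by blast
  have part1: "P 3 \<inter> P 4 = {1/2}"
  proof
    show "{1/2} \<subseteq> P 3 \<inter> P 4"
    proof -
      have "1/2 \<in> P 3" unfolding P_def by (rule image_eqI[where x=0]) (simp_all add: K0 sysq_def affc_def)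
      moreover have "1/2 \<in> P 4" unfolding P_def by (rule image_eqI[where x=1]) (simp_all add: K1 sysq_def affc_def)
      ultimately show ?thesis by simp
    qed
  next
    show "P 3 \<inter> P 4 \<subseteq> {1/2}"
    proof
      fix x assume x: "x \<in> P 3 \<inter> P 4"
      obtain a where a: "a \<in> K" "x = affc (sysq p r q 3) a" using Pmem x by blast
      obtain b where b: "b \<in> K" "x = affc (sysq p r q 4) b" using Pmem x by blast
      have xa: "x = 1/2 - q * a" using a(2) by (simp add: sysq_def affc_def)
      have xb: "x = 1/2 - r * (1 - b)" using b(2) by (simp add: sysq_def affc_def algebra_simps)
      have eq: "q * a = r * (1 - b)" using xa xb by simp
      show "x \<in> {1/2}"
      proof (cases "a = 0")
        case True then show ?thesis using xa by simp
      next
        case False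
        have a0: "a > 0" using False a(1) K01 by force
        have "q * a > 0" using a0 q by simp
        then have "r * (1 - b) > 0" using eq by simp
        then have b1: "b < 1" using pr by (simp add: zero_less_mult_iff)
        obtain n a' where na: "a' \<in> K" "a' \<ge> 1/3" "a = p^n * a'"
          using decomp_a[OF pr q K01 Kinv a(1) a0] by blast
        obtain m b' where mb: "b' \<in> K" "1 - b' \<ge> 1/3" "1 - b = r^m * (1 - b')"
          using decomp_b[OF pr q K01 Kinv b(1) b1] by blast
        have "q * p^n * a' = r^(Suc m) * (1 - b')"
          using eq na(3) mb(3) by (simp add: algebra_simps)
        then have "q \<in> Nset p r" using in_Nset[OF pr q KL na(1,2) mb(1,2)] by blast
        then show ?thesis using notN by blast
      qed
    qed
  qed
  have part2: "P i \<inter> P j = {}" if ij: "i\<in>{1..6}" "j\<in>{1..6}" "i \<noteq> j" "{i, j} \<noteq> {3, 4}" for i j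
  proof (rule ccontr)
    assume "P i \<inter> P j \<noteq> {}"
    then obtain x where x: "x \<in> P i" "x \<in> P j" by blast
    obtain z where z: "z \<in> K" "x = affc (sysq p r q i) z" using Pmem x(1) by blast
    obtain z' where z': "z' \<in> K" "x = affc (sysq p r q j) z'" using Pmem x(2) by blast
    have z01: "z \<in> {0..1}" "z' \<in> {0..1}" using z z' K01 by auto
    have "lo i \<le> x \<and> x \<le> hi i" using lohi[OF pr q z01(1) ij(1)] z(2) by simp
    moreover have "lo j \<le> x \<and> x \<le> hi j" using lohi[OF pr q z01(2) ij(2)] z'(2) by simp
    moreover have "hi i < lo j \<or> hi j < lo i" using lohi_sep[OF ij] .
    ultimately show False by linarith
  qed
  have part3: "\<not> weak_separation 6 (sysq p r q)" using nonWSP[OF pr q assms(5)] .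
  show "let K = attractor 6 (sysq p r q); P = (\<lambda>i. affc (sysq p r q i) ` K) in
       P 3 \<inter> P 4 = {1/2} \<and>
       (\<forall>i\<in>{1..6}. \<forall>j\<in>{1..6}. i \<noteq> j \<and> {i, j} \<noteq> {3, 4} \<longrightarrow> P i \<inter> P j = {}) \<and>
       \<not> weak_separation 6 (sysq p r q)"
  proof -
    have "P 3 \<inter> P 4 = {1/2} \<and>
       (\<forall>i\<in>{1..6}. \<forall>j\<in>{1..6}. i \<noteq> j \<and> {i, j} \<noteq> {3, 4} \<longrightarrow> P i \<inter> P j = {}) \<and>
       \<not> weak_separation 6 (sysq p r q)" using part1 part2 part3 by blast
    then show ?thesis unfolding Let_def K_def P_def .
  qed
qed


end
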